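(* Consider $L_2$-regularized linear regression in the limit $N\to\infty$, with $[A,\Gamma]=0$. Let $K:=A+\Gamma$ (assumed invertible), $A':=K^{-1}A$, $\Gamma':=K^{-1}\Gamma$, $U:=\mathbf{u}\mathbf{u}^{\mathrm T}$, $\mathbf{w}^*:=K^{-1}A\mathbf{u}$, and suppose the stationary distribution of the SGD parameter has mean $\mathbf{w}^*$ and covariance $\Sigma:=\mathbb{E}_{\mathbf{w}}[(\mathbf{w}-\mathbf{w}^* )(\mathbf{w}-\mathbf{w}^* )^{\mathrm T}]$. Then the averaged noise covariance is $$C=\mathbb{E}_{\mathbf{w}}[C(\mathbf{w})]=\frac1S\left(A\Sigma A+\mathrm{Tr}[A\Sigma]A+\mathrm{Tr}[\Gamma'^{\mathrm T}A\Gamma'U]A+\Gamma A'UA'\Gamma\right).$$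
   Context: Data: $x_i\in\mathbb{R}^D$ i.i.d. $\mathcal N(0,A)$, $A$ symmetric positive definite; noiseless labels $y_i=\mathbf{u}^{\mathrm T}x_i$ for a fixed $\mathbf{u}$. $\Gamma$ is a symmetric $D\times D$ matrix. Per-sample loss $\ell_i(\mathbf{w})=\frac12[(\mathbf{w}-\mathbf{u})^{\mathrm T}x_i]^2+\frac12\mathbf{w}^{\mathrm T}\Gamma\mathbf{w}$, and $L_\Gamma(\mathbf{w})=\frac1N\sum_i\ell_i(\mathbf{w})$. Minibatch size $S$; noise covariance $C(\mathbf{w})=\frac{1}{SN}\sum_i\nabla\ell_i\nabla\ell_i^{\mathrm T}-\frac1S\nabla L_\Gamma\nabla L_\Gamma^{\mathrm T}$, taken in the limit $N\to\infty$; $\mathbb{E}_{\mathbf{w}}$ is over the stationary distribution of SGD. *)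

theory Defs
  imports "HOL-Analysis.Analysis" "HOL-Probability.Probability"
begin

text \<open>Outer product a b^T.\<close>
definition outer :: "real^'n \<Rightarrow> real^'n \<Rightarrow> real^'n^'n" where
  "outer a b = (\<chi> i j. a$i * b$j)"

text \<open>Symmetric positive definite matrices.\<close>
definition pos_def :: "real^'n^'n \<Rightarrow> bool" where
  "pos_def A \<longleftrightarrow> transpose A = A \<and> (\<forall>x. x \<noteq> 0 \<longrightarrow> x \<bullet> (A *v x) > 0)"

text \<open>Density of the centered Gaussian N(0,A) on R^n (A positive definite).\<close>
definition gauss_density :: "real^'n^'n \<Rightarrow> real^'n \<Rightarrow> real" where
  "gauss_density A x =
     exp (- (x \<bullet> (matrix_inv A *v x)) / 2) / sqrt ((2 * pi) ^ CARD('n) * det A)"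

definition gaussian :: "real^'n^'n \<Rightarrow> (real^'n) measure" where
  "gaussian A = density lborel (\<lambda>x. ennreal (gauss_density A x))"

text \<open>Per-sample loss l(w) = 1/2 ((w-u)^T x)^2 + 1/2 w^T Gamma w, and its gradient in w.\<close>
definition sample_loss :: "real^'n^'n \<Rightarrow> real^'n \<Rightarrow> real^'n \<Rightarrow> real^'n \<Rightarrow> real" where
  "sample_loss \<Gamma> u x w = ((w - u) \<bullet> x)^2 / 2 + (w \<bullet> (\<Gamma> *v w)) / 2"

definition sample_grad :: "real^'n^'n \<Rightarrow> real^'n \<Rightarrow> real^'n \<Rightarrow> real^'n \<Rightarrow> real^'n" where
  "sample_grad \<Gamma> u x w = ((w - u) \<bullet> x) *\<^sub>R x + \<Gamma> *v w"

text \<open>Gradient of the full loss L_Gamma in the limit N -> infinity (population average).\<close>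
definition full_grad :: "real^'n^'n \<Rightarrow> real^'n^'n \<Rightarrow> real^'n \<Rightarrow> real^'n \<Rightarrow> real^'n" where
  "full_grad A \<Gamma> u w = integral\<^sup>L (gaussian A) (\<lambda>x. sample_grad \<Gamma> u x w)"

text \<open>SGD noise covariance C(w) in the limit N -> infinity, minibatch size S.\<close>
definition noise_cov :: "real^'n^'n \<Rightarrow> real^'n^'n \<Rightarrow> real^'n \<Rightarrow> nat \<Rightarrow> real^'n \<Rightarrow> real^'n^'n" where
  "noise_cov A \<Gamma> u S w =
     (1 / real S) *\<^sub>R integral\<^sup>L (gaussian A) (\<lambda>x. outer (sample_grad \<Gamma> u x w) (sample_grad \<Gamma> u x w))
     - (1 / real S) *\<^sub>R outer (full_grad A \<Gamma> u w) (full_grad A \<Gamma> u w)"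

lemma sample_grad_is_gradient:
  assumes "transpose \<Gamma> = \<Gamma>"
  shows "((\<lambda>w. sample_loss \<Gamma> u x w) has_derivative (\<lambda>h. sample_grad \<Gamma> u x w \<bullet> h)) (at w)"
proof -
  have sym: "w \<bullet> (\<Gamma> *v h) = (\<Gamma> *v w) \<bullet> h" for h
    by (metis assms dot_lmul_matrix inner_commute vector_transpose_matrix)
  have "((\<lambda>w. ((w - u) \<bullet> x)^2 / 2 + (w \<bullet> (\<Gamma> *v w)) / 2) has_derivative
     (\<lambda>h. (2 * ((w - u) \<bullet> x) * (h \<bullet> x)) / 2 + (h \<bullet> (\<Gamma> *v w) + w \<bullet> (\<Gamma> *v h)) / 2)) (at w)"
    by (auto intro!: derivative_eq_intros bounded_linear.has_derivative[OF matrix_vector_mul_bounded_linear])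
  then show ?thesis
    unfolding sample_loss_def sample_grad_def
    by (rule has_derivative_eq_rhs) (auto simp: fun_eq_iff sym inner_commute algebra_simps field_simps)
qed

end

theory Submission
  imports Defs
begin

(* ---- part P1 ---- *)

proposition
 fixes f :: "real^'n \<Rightarrow> real^'n"
  assumes "linear f" "S \<in> lmeasurable"
  shows measurable_linear_image': "(f ` S) \<in> lmeasurable"
    and measure_linear_image': "measure lebesgue (f ` S) = \<bar>det (matrix f)\<bar> * measure lebesgue S" (is "?Q f S")
proof -
  have "\<forall>S \<in> lmeasurable. (f ` S) \<in> lmeasurable \<and> ?Q f S"
  proof (rule induct_linear_elementary [OF \<open>linear f\<close>]; intro ballI)
    fix f g and S :: "(real,'n) vec set"
    assume "linear f" and "linear g"
      and f [rule_format]: "\<forall>S \<in> lmeasurable. f ` S \<in> lmeasurable \<and> ?Q f S"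
      and g [rule_format]: "\<forall>S \<in> lmeasurable. g ` S \<in> lmeasurable \<and> ?Q g S"
      and S: "S \<in> lmeasurable"
    then have gS: "g ` S \<in> lmeasurable"
      by blast
    show "(f \<circ> g) ` S \<in> lmeasurable \<and> ?Q (f \<circ> g) S"
      using f [OF gS] g [OF S] matrix_compose [OF \<open>linear g\<close> \<open>linear f\<close>]
      by (simp add: o_def image_comp abs_mult det_mul)
  next
    fix f :: "real^'n::_ \<Rightarrow> real^'n::_" and i and S :: "(real^'n::_) set"
    assume "linear f" and 0: "\<And>x. f x $ i = 0" and "S \<in> lmeasurable"
    then have "\<not> inj f"
      by (metis (full_types) linear_injective_imp_surjective one_neq_zero surjE vec_component)
    have detf: "det (matrix f) = 0"
      using \<open>\<not> inj f\<close> det_nz_iff_inj[OF \<open>linear f\<close>] by blast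
    show "f ` S \<in> lmeasurable \<and> ?Q f S"
    proof
      show "f ` S \<in> lmeasurable"
        using lmeasurable_iff_indicator_has_integral \<open>linear f\<close> \<open>\<not> inj f\<close> negligible_UNIV negligible_linear_singular_image by blast
      have "measure lebesgue (f ` S) = 0"
        by (meson \<open>\<not> inj f\<close> \<open>linear f\<close> negligible_imp_measure0 negligible_linear_singular_image)
      also have "\<dots> = \<bar>det (matrix f)\<bar> * measure lebesgue S"
        by (simp add: detf)
      finally show "?Q f S" .
    qed
  next
    fix c and S :: "(real^'n::_) set"
    assume "S \<in> lmeasurable"
    show "(\<lambda>a. \<chi> i. c i * a $ i) ` S \<in> lmeasurable \<and> ?Q (\<lambda>a. \<chi> i. c i * a $ i) S"
    proof
      show "(\<lambda>a. \<chi> i. c i * a $ i) ` S \<in> lmeasurable"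
        by (simp add: \<open>S \<in> lmeasurable\<close> measurable_stretch)
      show "?Q (\<lambda>a. \<chi> i. c i * a $ i) S"
        by (simp add: measure_stretch [OF \<open>S \<in> lmeasurable\<close>, of c] axis_def matrix_def det_diagonal)
    qed
  next
    fix m :: "'n" and n :: "'n" and S :: "(real, 'n) vec set"
    assume "m \<noteq> n" and "S \<in> lmeasurable"
    let ?h = "\<lambda>v::(real, 'n) vec. \<chi> i. v $ Transposition.transpose m n i"
    have lin: "linear ?h"
      by (rule linearI) (simp_all add: plus_vec_def scaleR_vec_def)
    have meq: "measure lebesgue ((\<lambda>v::(real, 'n) vec. \<chi> i. v $ Transposition.transpose m n i) ` cbox a b)
             = measure lebesgue (cbox a b)" for a b
    proof (cases "cbox a b = {}")
      case True then show ?thesis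
        by simp
    next
      case False
      then have him: "?h ` (cbox a b) \<noteq> {}"
        by blast
      have eq: "?h ` (cbox a b) = cbox (?h a) (?h b)"
        by (auto simp: image_iff lambda_swap_Galois mem_box_cart) (metis transpose_involutory)+
      show ?thesis
        using him prod.permute [OF permutes_swap_id, where S=UNIV and g="\<lambda>i. (b - a)$i", symmetric]
        by (simp add: eq content_cbox_cart False)
    qed
    have "(\<chi> i j. if Transposition.transpose m n i = j then 1 else 0) = (\<chi> i j. if j = Transposition.transpose m n i then 1 else (0::real))"
      by (auto intro!: Cart_lambda_cong)
    then have "matrix ?h = transpose(\<chi> i j. mat 1 $ i $ Transposition.transpose m n j)"
      by (auto simp: matrix_eq transpose_def axis_def mat_def matrix_def)
    then have 1: "\<bar>det (matrix ?h)\<bar> = 1"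
      by (simp add: det_permute_columns permutes_swap_id sign_swap_id abs_mult)
    show "?h ` S \<in> lmeasurable \<and> ?Q ?h S"
      using measure_linear_sufficient [OF lin \<open>S \<in> lmeasurable\<close>] meq 1 by force
  next
    fix m n :: "'n" and S :: "(real, 'n) vec set"
    assume "m \<noteq> n" and "S \<in> lmeasurable"
    let ?h = "\<lambda>v::(real, 'n) vec. \<chi> i. if i = m then v $ m + v $ n else v $ i"
    have lin: "linear ?h"
      by (rule linearI) (auto simp: algebra_simps plus_vec_def scaleR_vec_def vec_eq_iff)
    have meqm: "matrix ?h = (\<chi> k. if k = m then row m (mat 1) + 1 *s row n (mat 1) else row k (mat 1))"
      by (auto simp: matrix_def vec_eq_iff row_def axis_def mat_def)
    have 1: "det(matrix ?h) = 1"
      unfolding meqm using det_row_operation[OF \<open>m \<noteq> n\<close>, of "mat 1" 1] by simp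
    have meq: "measure lebesgue (?h ` (cbox a b)) = measure lebesgue (cbox a b)" for a b
    proof (cases "cbox a b = {}")
      case True then show ?thesis by simp
    next
      case False
      then have ne: "(+) (\<chi> i. if i = n then - a $ n else 0) ` cbox a b \<noteq> {}"
        by auto
      let ?v = "\<chi> i. if i = n then - a $ n else 0"
      have "?h ` cbox a b
            = (+) (\<chi> i. if i = m \<or> i = n then a $ n else 0) ` ?h ` (+) ?v ` (cbox a b)"
        using \<open>m \<noteq> n\<close> unfolding image_comp o_def by (force simp: vec_eq_iff)
      then have "measure lebesgue (?h ` (cbox a b))
               = measure lebesgue ((\<lambda>v. \<chi> i. if i = m then v $ m + v $ n else v $ i) `
                                   (+) ?v ` cbox a b)"
        by (rule ssubst) (rule measure_translation)
      also have "\<dots> = measure lebesgue ((\<lambda>v. \<chi> i. if i = m then v $ m + v $ n else v $ i) ` cbox (?v +a) (?v + b))"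
        by (metis (no_types, lifting) cbox_translation)
      also have "\<dots> = measure lebesgue ((+) ?v ` cbox a b)"
        apply (subst measure_shear_interval)
        using \<open>m \<noteq> n\<close> ne apply auto
        apply (simp add: cbox_translation)
        by (metis cbox_borel cbox_translation measure_completion sets_lborel)
      also have "\<dots> = measure lebesgue (cbox a b)"
        by (rule measure_translation)
        finally show ?thesis .
    qed
    show "?h ` S \<in> lmeasurable \<and> ?Q ?h S"
      using measure_linear_sufficient [OF lin \<open>S \<in> lmeasurable\<close>] meq 1 by force
  qed
  with assms show "(f ` S) \<in> lmeasurable" "?Q f S"
    by metis+
qed


(* ---- part P2 ---- *)

lemma matrix_inv_both:
  fixes A :: "'a::semiring_1^'n^'m"
  assumes "invertible A"
  shows "A ** matrix_inv A = mat 1 \<and> matrix_inv A ** A = mat 1"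
  using assms unfolding invertible_def matrix_inv_def by (rule someI_ex)

lemma matrix_inv_right: "invertible A \<Longrightarrow> A ** matrix_inv A = mat 1"
  using matrix_inv_both by blast
lemma matrix_inv_left: "invertible A \<Longrightarrow> matrix_inv A ** A = mat 1"
  using matrix_inv_both by blast

lemma lborel_linear_cv:
  fixes B :: "real^'n^'n"
  assumes B: "invertible B"
  shows "lborel = density (distr lborel borel ((*v) B)) (\<lambda>_. ennreal \<bar>det B\<bar>)"
proof (rule lborel_eqI)
  fix l u :: "real^'n" assume le: "\<And>b. b \<in> Basis \<Longrightarrow> l \<bullet> b \<le> u \<bullet> b"
  define Bi where "Bi = matrix_inv B"
  have BBi: "B ** Bi = mat 1" "Bi ** B = mat 1"
    using B by (auto simp: Bi_def matrix_inv_right matrix_inv_left)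
  have det1: "det B * det Bi = 1"
    using BBi by (metis det_I det_mul)
  have pre: "(*v) B -` box l u = (*v) Bi ` box l u"
  proof (intro set_eqI iffI)
    fix x assume "x \<in> (*v) B -` box l u"
    then show "x \<in> (*v) Bi ` box l u"
      by (intro image_eqI[where x="B *v x"]) (auto simp: matrix_vector_mul_assoc BBi)
  next
    fix x assume "x \<in> (*v) Bi ` box l u"
    then obtain y where "y \<in> box l u" "x = Bi *v y" by blast
    then show "x \<in> (*v) B -` box l u"
      by (simp add: matrix_vector_mul_assoc BBi)
  qed
  have lm: "box l u \<in> lmeasurable" by simp
  have lin: "linear ((*v) Bi)" by simp
  have im: "(*v) Bi ` box l u \<in> lmeasurable"
    by (rule measurable_linear_image'[OF lin lm])
  have "measure lebesgue ((*v) Bi ` box l u) = \<bar>det Bi\<bar> * measure lebesgue (box l u)"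
    using measure_linear_image'[OF lin lm] by (simp add: matrix_of_matrix_vector_mul)
  have meas: "(*v) B \<in> borel_measurable borel"
    by (intro borel_measurable_continuous_onI linear_continuous_on matrix_vector_mul_bounded_linear)
  have borel_pre: "(*v) Bi ` box l u \<in> sets borel"
    unfolding pre[symmetric] by (rule measurable_sets_borel[OF meas]) simp
  have "emeasure (density (distr lborel borel ((*v) B)) (\<lambda>_. ennreal \<bar>det B\<bar>)) (box l u)
      = ennreal \<bar>det B\<bar> * emeasure lborel ((*v) B -` box l u)"
    apply (subst emeasure_density)
    subgoal using meas by simp
    subgoal by simp
    apply (subst nn_integral_cmult_indicator)
    subgoal by simp
    apply (subst emeasure_distr[OF meas[folded measurable_lborel2]])
    by simp_all
  also have "emeasure lborel ((*v) B -` box l u) = emeasure lebesgue ((*v) Bi ` box l u)"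
    unfolding pre using borel_pre by (simp add: emeasure_completion)
  also have "\<dots> = ennreal (measure lebesgue ((*v) Bi ` box l u))"
    using im by (simp add: emeasure_eq_measure2)
  also have "\<dots> = ennreal (\<bar>det Bi\<bar> * measure lebesgue (box l u))"
    using measure_linear_image'[OF lin lm] by (simp add: matrix_of_matrix_vector_mul)
  also have "ennreal \<bar>det B\<bar> * ennreal (\<bar>det Bi\<bar> * measure lebesgue (box l u)) = ennreal (measure lebesgue (box l u))"
  proof -
    have "\<bar>det B\<bar> * (\<bar>det Bi\<bar> * measure lebesgue (box l u)) = measure lebesgue (box l u)"
      using det1 by (metis abs_1 abs_mult mult.assoc mult_1)
    then show ?thesis
      by (subst ennreal_mult[symmetric]) auto
  qed
  also have "ennreal (measure lebesgue (box l u)) = ennreal (\<Prod>b\<in>Basis. (u - l) \<bullet> b)"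
  proof -
    have "measure lebesgue (box l u) = measure lborel (box l u)"
      by (rule measure_completion) simp
    then show ?thesis using le by (simp add: measure_lborel_box_eq)
  qed
  finally show "emeasure (density (distr lborel borel ((*v) B)) (\<lambda>_. ennreal \<bar>det B\<bar>)) (box l u) = (\<Prod>b\<in>Basis. (u - l) \<bullet> b)" .
qed simp

lemma det_invertible_nz: "invertible (B::real^'n^'n) \<Longrightarrow> det B \<noteq> 0"
  by (simp add: invertible_det_nz)

lemma lborel_linear_cv_integrable:
  fixes B :: "real^'n^'n" and f :: "real^'n \<Rightarrow> 'a::{banach, second_countable_topology}"
  assumes B: "invertible B" and f[measurable]: "f \<in> borel_measurable borel"
  shows "integrable lborel f \<longleftrightarrow> integrable lborel (\<lambda>z. f (B *v z))"
proof -
  have T[measurable]: "(*v) B \<in> borel_measurable borel"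
    by (intro borel_measurable_continuous_onI linear_continuous_on matrix_vector_mul_bounded_linear)
  have d: "det B \<noteq> 0" using B by (simp add: invertible_det_nz)
  have "integrable lborel f \<longleftrightarrow> integrable (density (distr lborel borel ((*v) B)) (\<lambda>_. ennreal \<bar>det B\<bar>)) f"
    using lborel_linear_cv[OF B] by simp
  also have "\<dots> \<longleftrightarrow> integrable (distr lborel borel ((*v) B)) (\<lambda>x. \<bar>det B\<bar> *\<^sub>R f x)"
    by (subst integrable_density) auto
  also have "\<dots> \<longleftrightarrow> integrable (distr lborel borel ((*v) B)) f"
  proof
    assume "integrable (distr lborel borel ((*v) B)) (\<lambda>x. \<bar>det B\<bar> *\<^sub>R f x)"
    then have "integrable (distr lborel borel ((*v) B)) (\<lambda>x. inverse \<bar>det B\<bar> *\<^sub>R (\<bar>det B\<bar> *\<^sub>R f x))"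
      by (rule integrable_scaleR_right)
    then show "integrable (distr lborel borel ((*v) B)) f" using d by simp
  qed simp
  also have "\<dots> \<longleftrightarrow> integrable lborel (\<lambda>z. f (B *v z))"
    by (subst integrable_distr_eq) auto
  finally show ?thesis .
qed

lemma lborel_linear_cv_integral:
  fixes B :: "real^'n^'n" and f :: "real^'n \<Rightarrow> 'a::{banach, second_countable_topology}"
  assumes B: "invertible B" and f[measurable]: "f \<in> borel_measurable borel"
  shows "(\<integral>x. f x \<partial>lborel) = \<bar>det B\<bar> *\<^sub>R (\<integral>z. f (B *v z) \<partial>lborel)"
proof -
  have T[measurable]: "(*v) B \<in> borel_measurable borel"
    by (intro borel_measurable_continuous_onI linear_continuous_on matrix_vector_mul_bounded_linear)
  have "(\<integral>x. f x \<partial>lborel) = (\<integral>x. f x \<partial>(density (distr lborel borel ((*v) B)) (\<lambda>_. ennreal \<bar>det B\<bar>)))"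
    using lborel_linear_cv[OF B] by simp
  also have "\<dots> = (\<integral>x. \<bar>det B\<bar> *\<^sub>R f x \<partial>(distr lborel borel ((*v) B)))"
    by (subst integral_density) auto
  also have "\<dots> = (\<integral>z. \<bar>det B\<bar> *\<^sub>R f (B *v z) \<partial>lborel)"
    by (subst integral_distr) auto
  also have "\<dots> = \<bar>det B\<bar> *\<^sub>R (\<integral>z. f (B *v z) \<partial>lborel)"
    by simp
  finally show ?thesis .
qed


(* ---- part P3 ---- *)

lemma inner_vm: "x \<bullet> (y v* T) = y \<bullet> (T *v (x::real^'n))"
  for T :: "real^'n^'n"
  by (metis dot_lmul_matrix inner_commute)

lemma quad_congr: "x \<bullet> ((transpose T ** M ** T) *v x) = (T *v x) \<bullet> (M *v (T *v x))"
  for T M :: "real^'n^'n"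
proof -
  have "(transpose T ** M ** T) *v x = (M *v (T *v x)) v* T"
    by (simp add: matrix_vector_mul_assoc[symmetric] transpose_matrix_vector)
  then show ?thesis by (simp add: inner_vm inner_commute)
qed

lemma pos_def_congr:
  fixes T M :: "real^'n^'n"
  assumes M: "pos_def M" and T: "invertible T"
  shows "pos_def (transpose T ** M ** T)"
  unfolding pos_def_def
proof safe
  show "transpose (transpose T ** M ** T) = transpose T ** M ** T"
    using M by (simp add: pos_def_def matrix_transpose_mul matrix_mul_assoc)
next
  fix x :: "real^'n" assume "x \<noteq> 0"
  have "T *v x \<noteq> 0"
    using inj_matrix_vector_mult[OF T] \<open>x \<noteq> 0\<close> by (metis injD matrix_vector_mult_0_right)
  then show "0 < x \<bullet> ((transpose T ** M ** T) *v x)"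
    using M unfolding quad_congr pos_def_def by blast
qed

lemma pos_def_diag: "pos_def M \<Longrightarrow> M$k$k > 0" for M :: "real^'n^'n"
proof -
  assume M: "pos_def M"
  have "(axis k 1 :: real^'n) \<noteq> 0" by (simp add: axis_eq_0_iff)
  then have "axis k 1 \<bullet> (M *v axis k 1) > 0" using M by (simp add: pos_def_def)
  moreover have "axis k 1 \<bullet> (M *v axis k (1::real)) = M$k$k"
    by (simp add: inner_axis' matrix_vector_mul_component inner_axis)
  ultimately show ?thesis by simp
qed

lemma matrix_sub_ldistrib: "(A::'a::ring_1^'n^'m) ** (B - C) = A ** B - A ** C"
  by (vector matrix_matrix_mult_def sum_subtractf[symmetric] field_simps)

lemma matrix_sub_rdistrib: "((B::'a::ring_1^'n^'m) - C) ** A = B ** A - C ** A"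
  by (vector matrix_matrix_mult_def sum_subtractf[symmetric] field_simps)

lemma ifz_mult: "(if P then a else 0) * b = (if P then a*b else (0::real))" by simp
lemma mult_ifz: "b * (if P then a else 0) = (if P then b*a else (0::real))" by simp

lemma mult_N_right:
  fixes X :: "real^'n^'n"
  shows "(X ** (\<chi> i j. if i = k then r$j else 0))$i$j = X$i$k * r$j"
  by (simp add: matrix_matrix_mult_def mult_ifz sum.delta' cong: if_cong)

lemma mult_N_left:
  fixes X :: "real^'n^'n"
  shows "(transpose (\<chi> i j. if i = k then r$j else 0) ** X)$i$j = r$i * X$k$j"
  by (simp add: matrix_matrix_mult_def transpose_def ifz_mult sum.delta' cong: if_cong)

lemma mult_shear_right:
  fixes X :: "real^'n^'n"
  shows "(X ** (mat 1 - (\<chi> i j. if i = k then r$j else 0)))$i$j = X$i$j - X$i$k * r$j"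
  by (simp add: matrix_sub_ldistrib mult_N_right)

lemma mult_shear_left:
  fixes X :: "real^'n^'n"
  shows "(transpose (mat 1 - (\<chi> i j. if i = k then r$j else 0)) ** X)$i$j = X$i$j - r$i * X$k$j"
proof -
  have "transpose (mat 1 - (\<chi> i j. if i = k then r$j else 0)) = mat 1 - transpose (\<chi> i j. if i = k then r$j else 0)"
    by (simp add: transpose_def vec_eq_iff mat_def)
  then show ?thesis by (simp add: matrix_sub_rdistrib mult_N_left)
qed

lemma shear_inv:
  fixes r :: "real^'n"
  assumes "r$k = 0"
  shows "(mat 1 - (\<chi> i j. if i = k then r$j else 0)) ** (mat 1 + (\<chi> i j. if i = k then r$j else 0)) = mat 1"
proof -
  let ?N = "(\<chi> i j. if i = k then r$j else 0) :: real^'n^'n"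
  have NN: "?N ** ?N = 0"
    using assms by (simp add: vec_eq_iff mult_N_right)
  show ?thesis
    by (simp add: matrix_add_ldistrib matrix_sub_rdistrib NN)
qed

lemma pos_def_sym: "pos_def M \<Longrightarrow> M$i$j = M$j$i" for M :: "real^'n^'n"
  unfolding pos_def_def by (metis transpose_def vec_lambda_beta)

lemma invertible_mat1: "invertible (mat 1 :: real^'n^'n)"
  unfolding invertible_def by (intro exI[of _ "mat 1"]) simp

lemma congr_diag_aux:
  fixes K :: "'n::finite set"
  assumes "finite K"
  shows "\<And>M::real^'n^'n. pos_def M \<Longrightarrow> (\<And>i j. i \<noteq> j \<Longrightarrow> i \<notin> K \<or> j \<notin> K \<Longrightarrow> M$i$j = 0)
     \<Longrightarrow> \<exists>T::real^'n^'n. invertible T \<and> (\<forall>i j. i \<noteq> j \<longrightarrow> (transpose T ** M ** T)$i$j = 0)"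
  using assms
proof (induction K rule: finite_induct)
  case empty
  then show ?case
    by (intro exI[of _ "mat 1"]) (simp add: invertible_mat1)
next
  case (insert k K M)
  define d where "d = M$k$k"
  have d: "d > 0" unfolding d_def using insert.prems(1) by (rule pos_def_diag)
  define r :: "real^'n" where "r = (\<chi> j. if j = k then 0 else M$k$j / d)"
  have rk: "r$k = 0" by (simp add: r_def)
  define T1 :: "real^'n^'n" where "T1 = mat 1 - (\<chi> i j. if i = k then r$j else 0)"
  have "T1 ** (mat 1 + (\<chi> i j. if i = k then r$j else 0)) = mat 1"
    unfolding T1_def by (rule shear_inv[OF rk])
  then have T1: "invertible T1"
    by (meson invertible_right_inverse)
  define M' where "M' = transpose T1 ** M ** T1"
  have M'e: "M'$i$j = (M$i$j - r$i * M$k$j) - (M$i$k - r$i * M$k$k) * r$j" for i j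
    unfolding M'_def T1_def by (simp add: mult_shear_right mult_shear_left)
  have sym: "M$i$j = M$j$i" for i j using insert.prems(1) by (rule pos_def_sym)
  have pd': "pos_def M'" unfolding M'_def using insert.prems(1) T1 by (rule pos_def_congr)
  have z': "M'$i$j = 0" if "i \<noteq> j" "i \<notin> K \<or> j \<notin> K" for i j
  proof (cases "i = k")
    case True
    then show ?thesis using that d rk
      by (simp add: M'e r_def d_def[symmetric])
  next
    case ik: False
    show ?thesis
    proof (cases "j = k")
      case True
      then show ?thesis using ik d
        by (simp add: M'e r_def d_def[symmetric] sym[of i k])
    next
      case jk: False
      show ?thesis
      proof (cases "i \<notin> K")
        case True
        then have "M$i$j = 0" "M$k$i = 0" "M$i$k = 0" using insert.prems(2) that ik by auto
        then show ?thesis using ik by (simp add: M'e r_def)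
      next
        case False
        then have "j \<notin> K" using that by auto
        then have "M$i$j = 0" "M$k$j = 0" using insert.prems(2) that jk by auto
        then show ?thesis using jk by (simp add: M'e r_def)
      qed
    qed
  qed
  obtain T3 :: "real^'n^'n" where T3: "invertible T3" "\<forall>i j. i \<noteq> j \<longrightarrow> (transpose T3 ** M' ** T3)$i$j = 0"
    using insert.IH[OF pd' z'] by blast
  have "transpose (T1 ** T3) ** M ** (T1 ** T3) = transpose T3 ** M' ** T3"
    by (simp add: M'_def matrix_transpose_mul matrix_mul_assoc)
  then show ?case
    using T3 T1 by (intro exI[of _ "T1 ** T3"]) (simp add: invertible_mult)
qed

lemma congr_identity:
  fixes A :: "real^'n^'n"
  assumes A: "pos_def A"
  shows "\<exists>S::real^'n^'n. invertible S \<and> transpose S ** A ** S = mat 1"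
proof -
  obtain T :: "real^'n^'n" where T: "invertible T" "\<And>i j. i \<noteq> j \<Longrightarrow> (transpose T ** A ** T)$i$j = 0"
    using congr_diag_aux[of UNIV A] A by auto
  define D where "D = transpose T ** A ** T"
  have Dpd: "pos_def D" unfolding D_def using A T(1) by (rule pos_def_congr)
  have Dd: "D$i$i > 0" for i using Dpd by (rule pos_def_diag)
  have Do: "i \<noteq> j \<Longrightarrow> D$i$j = 0" for i j using T(2) by (simp add: D_def)
  define G :: "real^'n^'n" where "G = (\<chi> i j. if i = j then 1 / sqrt (D$i$i) else 0)"
  define Gi :: "real^'n^'n" where "Gi = (\<chi> i j. if i = j then sqrt (D$i$i) else 0)"
  have "G ** Gi = mat 1"
    using Dd by (simp add: less_imp_neq[symmetric] G_def Gi_def matrix_matrix_mult_def vec_eq_iff mat_def ifz_mult sum.delta' cong: if_cong)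
  then have G: "invertible G" by (meson invertible_right_inverse)
  have tG: "transpose G = G" by (simp add: G_def transpose_def vec_eq_iff)
  have GD: "(G ** D)$i$j = D$i$j / sqrt (D$i$i)" for i j
    by (simp add: G_def matrix_matrix_mult_def ifz_mult sum.delta' cong: if_cong)
  have "(G ** D ** G) $i$j = (if i = j then 1 else 0)" for i j
  proof -
    have "(G ** D ** G) $i$j = (G ** D)$i$j / sqrt (D$j$j)"
      by (simp add: G_def matrix_matrix_mult_def mult_ifz sum.delta' cong: if_cong)
    also have "\<dots> = (if i = j then 1 else 0)"
      using Dd[of i] Do[of i j] by (auto simp: GD)
    finally show ?thesis .
  qed
  then have "G ** D ** G = mat 1" by (simp add: vec_eq_iff mat_def)
  moreover have "transpose (T ** G) ** A ** (T ** G) = G ** D ** G"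
    by (simp add: D_def matrix_transpose_mul matrix_mul_assoc tG)
  ultimately show ?thesis
    using T(1) G by (intro exI[of _ "T ** G"]) (simp add: invertible_mult)
qed


(* ---- part P4 ---- *)

interpretation lb_prod: product_sigma_finite "\<lambda>_::'a. (lborel :: real measure)"
  by standard

lemma std_prod_integral:
  fixes h :: "real \<Rightarrow> real" and b0 :: "'a::euclidean_space"
  assumes b0: "b0 \<in> Basis" and h[measurable]: "h \<in> borel_measurable borel"
    and hi: "integrable lborel (\<lambda>t. std_normal_density t * h t)"
  shows "integrable lborel (\<lambda>z::'a. (\<Prod>b\<in>Basis. std_normal_density (z \<bullet> b)) * h (z \<bullet> b0))"
    and "(\<integral>z. (\<Prod>b\<in>Basis. std_normal_density (z \<bullet> b)) * h (z \<bullet> b0) \<partial>(lborel::'a measure))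
          = (\<integral>t. std_normal_density t * h t \<partial>lborel)"
proof -
  define G where "G b t = (if b = b0 then std_normal_density t * h t else std_normal_density t)" for b :: 'a and t
  define emb :: "('a \<Rightarrow> real) \<Rightarrow> 'a" where "emb f = (\<Sum>b\<in>Basis. f b *\<^sub>R b)" for f
  define F where "F z = (\<Prod>b\<in>Basis. std_normal_density (z \<bullet> b)) * h (z \<bullet> b0)" for z :: 'a
  have F[measurable]: "F \<in> borel_measurable borel"
    unfolding F_def by measurable
  have emb[measurable]: "emb \<in> borel_measurable (Pi\<^sub>M Basis (\<lambda>_. lborel))"
    unfolding emb_def by measurable
  have embi: "emb f \<bullet> b = f b" if "b \<in> Basis" for f b
    using that by (simp add: emb_def inner_sum_left inner_Basis if_distrib sum.delta cong: if_cong)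
  have FG: "F (emb f) = (\<Prod>b\<in>Basis. G b (f b))" for f
  proof -
    have "(\<Prod>b\<in>Basis. G b (f b)) = G b0 (f b0) * (\<Prod>b\<in>Basis - {b0}. G b (f b))"
      using b0 by (simp add: prod.remove)
    also have "(\<Prod>b\<in>Basis - {b0}. G b (f b)) = (\<Prod>b\<in>Basis - {b0}. std_normal_density (f b))"
      by (intro prod.cong) (auto simp: G_def)
    also have "G b0 (f b0) * (\<Prod>b\<in>Basis - {b0}. std_normal_density (f b))
        = (std_normal_density (f b0) * (\<Prod>b\<in>Basis - {b0}. std_normal_density (f b))) * h (f b0)"
      by (simp add: G_def)
    also have "std_normal_density (f b0) * (\<Prod>b\<in>Basis - {b0}. std_normal_density (f b)) = (\<Prod>b\<in>Basis. std_normal_density (f b))"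
      using b0 by (simp add: prod.remove)
    finally show ?thesis
      unfolding F_def using b0 by (simp add: embi cong: prod.cong)
  qed
  have Gi: "integrable lborel (G b)" for b
    by (cases "b = b0") (auto simp: G_def[abs_def] hi)
  have lb: "(lborel::'a measure) = distr (Pi\<^sub>M Basis (\<lambda>_. lborel)) borel emb"
    unfolding emb_def by (rule lborel_eq)
  have "integrable (Pi\<^sub>M Basis (\<lambda>_. lborel)) (\<lambda>f. \<Prod>b\<in>Basis. G b (f b))"
    by (rule lb_prod.product_integrable_prod) (auto simp: Gi)
  then have "integrable (Pi\<^sub>M Basis (\<lambda>_. lborel)) (\<lambda>f. F (emb f))"
    by (simp add: FG)
  then have "integrable (distr (Pi\<^sub>M Basis (\<lambda>_. lborel)) borel emb) F"
    by (subst integrable_distr_eq) auto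
  then show "integrable lborel (\<lambda>z::'a. (\<Prod>b\<in>Basis. std_normal_density (z \<bullet> b)) * h (z \<bullet> b0))"
    using lb by (simp add: F_def[abs_def])
  have "(\<integral>z. F z \<partial>(lborel::'a measure)) = (\<integral>z. F z \<partial>(distr (Pi\<^sub>M Basis (\<lambda>_. lborel)) borel emb))"
    using lb by simp
  also have "\<dots> = (\<integral>f. F (emb f) \<partial>(Pi\<^sub>M Basis (\<lambda>_. lborel)))"
    by (subst integral_distr) auto
  also have "\<dots> = (\<integral>f. (\<Prod>b\<in>Basis. G b (f b)) \<partial>(Pi\<^sub>M Basis (\<lambda>_. lborel)))"
    by (simp add: FG)
  also have "\<dots> = (\<Prod>b\<in>Basis. integral\<^sup>L lborel (G b))"
    by (rule lb_prod.product_integral_prod) (auto simp: Gi)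
  also have "\<dots> = integral\<^sup>L lborel (G b0) * (\<Prod>b\<in>Basis - {b0}. integral\<^sup>L lborel (G b))"
    using b0 by (simp add: prod.remove)
  also have "(\<Prod>b\<in>Basis - {b0}. integral\<^sup>L lborel (G b)) = 1"
    by (intro prod.neutral) (auto simp: G_def[abs_def])
  finally show "(\<integral>z. (\<Prod>b\<in>Basis. std_normal_density (z \<bullet> b)) * h (z \<bullet> b0) \<partial>(lborel::'a measure))
          = (\<integral>t. std_normal_density t * h t \<partial>lborel)"
    by (simp add: F_def[abs_def] G_def[abs_def])
qed


(* ---- part P5a ---- *)

lemma Basis_vec_real: "(Basis :: (real^'n) set) = range (\<lambda>i. axis i 1)"
  by (auto simp: Basis_vec_def)

lemma prod_Basis_vec: "(\<Prod>b\<in>(Basis::(real^'n) set). f (z \<bullet> b)) = (\<Prod>i\<in>UNIV. f (z $ i))"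
proof -
  have inj: "inj (\<lambda>i::'n. axis i (1::real))" by (auto simp: inj_on_def axis_eq_axis)
  show ?thesis
    unfolding Basis_vec_real by (subst prod.reindex[OF inj]) (simp add: inner_axis)
qed

lemma std_prod_formula:
  "(\<Prod>i\<in>(UNIV::'n::finite set). std_normal_density (z $ i)) = exp (- (z \<bullet> z) / 2) / sqrt ((2 * pi) ^ CARD('n))"
proof -
  have "(\<Prod>i\<in>(UNIV::'n::finite set). std_normal_density (z $ i)) = (\<Prod>i\<in>(UNIV::'n set). (1 / sqrt (2 * pi)) * exp (- (z $ i)\<^sup>2 / 2))"
    by (simp add: std_normal_density_def)
  also have "\<dots> = (1 / sqrt (2 * pi)) ^ CARD('n) * exp (\<Sum>i\<in>UNIV. - (z $ i)\<^sup>2 / 2)"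
    by (subst prod.distrib) (simp add: exp_sum)
  also have "(\<Sum>i\<in>UNIV. - (z $ i)\<^sup>2 / 2) = - (z \<bullet> z) / 2"
    by (simp add: inner_vec_def sum_divide_distrib[symmetric] sum_negf power2_eq_square)
  finally show ?thesis
    by (simp add: real_sqrt_power[symmetric] power_one_over power_mult_distrib)
qed

lemma inner_S: "x \<bullet> (S *v y) = (transpose S *v x) \<bullet> (y::real^'n)" for S :: "real^'n^'n"
  by (metis inner_vm inner_commute transpose_matrix_vector transpose_transpose)

lemma orth_norm: "orthogonal_matrix Q \<Longrightarrow> (Q *v z) \<bullet> (Q *v z) = z \<bullet> (z::real^'n)" for Q :: "real^'n^'n"
  by (metis inner_S matrix_vector_mul_assoc matrix_vector_mul_lid orthogonal_matrix_def)

lemma gauss_setup: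
  fixes A :: "real^'n^'n" and c :: "real^'n" and i0 :: 'n
  assumes A: "pos_def A"
  obtains C :: "real^'n^'n" where "invertible C"
    "\<And>z. gauss_density A (C *v z) * \<bar>det C\<bar> = (\<Prod>i\<in>UNIV. std_normal_density (z $ i))"
    "\<And>z. c \<bullet> (C *v z) = sqrt (c \<bullet> (A *v c)) * z $ i0"
    "invertible A" "det A > 0"
proof -
  obtain S :: "real^'n^'n" where S: "invertible S" "transpose S ** A ** S = mat 1"
    using congr_identity[OF A] by blast
  define Pi where "Pi = matrix_inv (transpose S)"
  have tS: "invertible (transpose S)" using S(1) by (rule transpose_invertible)
  have PS: "transpose S ** Pi = mat 1" "Pi ** transpose S = mat 1"
    using tS by (auto simp: Pi_def matrix_inv_right matrix_inv_left)
  have "Pi ** (transpose S ** A ** S) = Pi" using S(2) by simp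
  then have AS: "A ** S = Pi" by (simp add: matrix_mul_assoc PS)
  have AA: "A ** (S ** transpose S) = mat 1"
    by (simp add: matrix_mul_assoc AS PS)
  then have invA: "invertible A" by (meson invertible_right_inverse)
  have Ainv: "matrix_inv A = S ** transpose S"
  proof -
    have "matrix_inv A = matrix_inv A ** (A ** (S ** transpose S))" by (simp add: AA)
    also have "\<dots> = S ** transpose S" by (simp add: matrix_mul_assoc matrix_inv_left[OF invA])
    finally show ?thesis .
  qed
  have Atr: "transpose A = A" using A by (simp add: pos_def_def)
  have Adec: "A = Pi ** transpose Pi"
  proof -
    have "transpose Pi = transpose S ** A"
      using AS[symmetric] by (simp add: matrix_transpose_mul Atr)
    then show ?thesis by (simp add: matrix_mul_assoc PS)
  qed
  have "det (transpose S ** A ** S) = 1" using S(2) by simp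
  then have detAS: "det A * (det S * det S) = 1" by (simp add: det_mul algebra_simps)
  have "det (transpose S ** Pi) = 1" using PS by simp
  then have detPS: "det S * det Pi = 1" by (simp add: det_mul)
  have detA: "det A > 0"
  proof -
    have "det S * det S > 0" using detPS by (metis mult_eq_0_iff not_real_square_gt_zero zero_neq_one)
    then show ?thesis using detAS by (metis zero_less_mult_pos2 zero_less_one)
  qed
  define v where "v = transpose Pi *v c"
  define r where "r = norm v"
  have rr: "r = sqrt (c \<bullet> (A *v c))"
  proof -
    have "c \<bullet> (A *v c) = v \<bullet> v"
      by (simp add: v_def Adec inner_S matrix_vector_mul_assoc[symmetric])
    then show ?thesis by (simp add: r_def norm_eq_sqrt_inner)
  qed
  obtain Q :: "real^'n^'n" where Q: "orthogonal_matrix Q" "transpose Q *v v = r *\<^sub>R axis i0 1"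
  proof (cases "v = 0")
    case True
    then show ?thesis using that[of "mat 1"] by (simp add: orthogonal_matrix_id r_def)
  next
    case False
    then have "norm (v /\<^sub>R r) = 1" by (simp add: r_def)
    then obtain Q :: "real^'n^'n" where Q: "orthogonal_matrix Q" "Q *v axis i0 1 = v /\<^sub>R r"
      using orthogonal_matrix_exists_basis by blast
    have "Q *v (r *\<^sub>R axis i0 1) = v" using Q(2) False
      by (simp add: matrix_vector_mult_scaleR r_def)
    then have "transpose Q *v v = r *\<^sub>R axis i0 1"
      using Q(1) by (metis matrix_vector_mul_assoc matrix_vector_mul_lid orthogonal_matrix_def)
    then show ?thesis using that Q(1) by blast
  qed
  define C where "C = Pi ** Q"
  have invQ: "invertible Q" using Q(1) unfolding orthogonal_matrix_def invertible_def by blast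
  have invPi: "invertible Pi" using PS unfolding invertible_def by blast
  have invC: "invertible C" unfolding C_def using invPi invQ by (rule invertible_mult)
  have detQ: "\<bar>det Q\<bar> = 1" using det_orthogonal_matrix[OF Q(1)] by auto
  have detC: "\<bar>det C\<bar> * \<bar>det S\<bar> = 1"
  proof -
    have "\<bar>det C\<bar> * \<bar>det S\<bar> = \<bar>det S * det Pi\<bar> * \<bar>det Q\<bar>"
      by (simp add: C_def det_mul abs_mult)
    then show ?thesis using detPS detQ by simp
  qed
  have quad: "(C *v z) \<bullet> (matrix_inv A *v (C *v z)) = z \<bullet> z" for z
  proof -
    have "transpose S *v (C *v z) = Q *v z"
      by (simp add: C_def matrix_vector_mul_assoc matrix_mul_assoc PS)
    moreover have "(C *v z) \<bullet> (matrix_inv A *v (C *v z)) = (C *v z) \<bullet> (S *v (transpose S *v (C *v z)))"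
      by (simp add: Ainv matrix_vector_mul_assoc matrix_mul_assoc)
    moreover have "\<dots> = (transpose S *v (C *v z)) \<bullet> (transpose S *v (C *v z))"
      by (rule inner_S)
    ultimately show ?thesis
      using orth_norm[OF Q(1)] by simp
  qed
  have dens: "gauss_density A (C *v z) * \<bar>det C\<bar> = (\<Prod>i\<in>UNIV. std_normal_density (z $ i))" for z
  proof -
    have sq: "sqrt ((2 * pi) ^ CARD('n) * det A) = sqrt ((2 * pi) ^ CARD('n)) * \<bar>det C\<bar>"
    proof -
      have "det A = \<bar>det C\<bar>^2"
        using detAS detC by (metis (no_types, opaque_lifting) abs_mult_self_eq mult.commute mult_1 power2_eq_square mult.assoc)
      then show ?thesis by (simp add: real_sqrt_mult)
    qed
    have dC: "\<bar>det C\<bar> > 0" using detC by (metis abs_ge_zero less_eq_real_def mult_eq_0_iff zero_neq_one)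
    show ?thesis
      unfolding gauss_density_def quad std_prod_formula sq using dC by simp
  qed
  have proj: "c \<bullet> (C *v z) = sqrt (c \<bullet> (A *v c)) * z $ i0" for z
  proof -
    have "c \<bullet> (C *v z) = (transpose C *v c) \<bullet> z"
      using inner_S[of c C z] by simp
    also have "transpose C *v c = r *\<^sub>R axis i0 1"
    proof -
      have "transpose C *v c = transpose Q *v (transpose Pi *v c)"
        by (simp only: C_def matrix_transpose_mul matrix_vector_mul_assoc)
      then show ?thesis using Q(2) by (simp only: v_def)
    qed
    finally show ?thesis by (simp add: rr inner_axis')
  qed
  show ?thesis using that[OF invC dens proj invA detA] .
qed

lemma gauss_density_nonneg: "det A \<ge> 0 \<Longrightarrow> gauss_density A x \<ge> 0"
  unfolding gauss_density_def by simp

lemma gauss_density_measurable[measurable]: "gauss_density A \<in> borel_measurable borel"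
proof -
  have "continuous_on UNIV ((*v) (matrix_inv A))"
    by (intro linear_continuous_on matrix_vector_mul_bounded_linear)
  then have "continuous_on UNIV (\<lambda>x. exp (- (x \<bullet> (matrix_inv A *v x)) / 2))"
    by (intro continuous_intros) auto
  then have [measurable]: "(\<lambda>x. exp (- (x \<bullet> (matrix_inv A *v x)) / 2)) \<in> borel_measurable borel"
    by (rule borel_measurable_continuous_onI)
  show ?thesis unfolding gauss_density_def[abs_def] by measurable
qed


(* ---- part P6 ---- *)

lemma gauss_proj:
  fixes A :: "real^'n^'n" and c :: "real^'n" and h :: "real \<Rightarrow> real"
  assumes A: "pos_def A" and h[measurable]: "h \<in> borel_measurable borel"
    and hi: "integrable lborel (\<lambda>t. std_normal_density t * h (sqrt (c \<bullet> (A *v c)) * t))"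
  shows "integrable (gaussian A) (\<lambda>x. h (c \<bullet> x))"
    and "(\<integral>x. h (c \<bullet> x) \<partial>gaussian A) = (\<integral>t. std_normal_density t * h (sqrt (c \<bullet> (A *v c)) * t) \<partial>lborel)"
proof -
  obtain i0 :: 'n where True by blast
  obtain C :: "real^'n^'n" where C: "invertible C"
    "\<And>z. gauss_density A (C *v z) * \<bar>det C\<bar> = (\<Prod>i\<in>UNIV. std_normal_density (z $ i))"
    "\<And>z. c \<bullet> (C *v z) = sqrt (c \<bullet> (A *v c)) * z $ i0"
    and "invertible A" and detA: "det A > 0"
    using gauss_setup[OF A, of c i0] by metis
  define q where "q = sqrt (c \<bullet> (A *v c))"
  define f where "f x = gauss_density A x * h (c \<bullet> x)" for x
  have f[measurable]: "f \<in> borel_measurable borel" unfolding f_def by measurable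
  have dC: "det C \<noteq> 0" using C(1) by (simp add: invertible_det_nz)
  have b0: "axis i0 1 \<in> (Basis :: (real^'n) set)" by simp
  have hq[measurable]: "(\<lambda>t. h (q * t)) \<in> borel_measurable borel" by measurable
  have fC: "\<bar>det C\<bar> *\<^sub>R f (C *v z) = (\<Prod>b\<in>Basis. std_normal_density (z \<bullet> b)) * h (q * (z \<bullet> axis i0 1))" for z
  proof -
    have "\<bar>det C\<bar> *\<^sub>R f (C *v z) = (gauss_density A (C *v z) * \<bar>det C\<bar>) * h (c \<bullet> (C *v z))"
      by (simp add: f_def)
    also have "\<dots> = (\<Prod>b\<in>Basis. std_normal_density (z \<bullet> b)) * h (q * (z \<bullet> axis i0 1))"
      unfolding C(2) C(3) prod_Basis_vec by (simp add: q_def inner_axis)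
    finally show ?thesis .
  qed
  note SP = std_prod_integral[OF b0 hq, unfolded q_def, OF hi, folded q_def]
  have int_lb: "integrable lborel f \<longleftrightarrow> integrable lborel (\<lambda>z. f (C *v z))"
    by (rule lborel_linear_cv_integrable[OF C(1) f])
  have "integrable lborel (\<lambda>z. \<bar>det C\<bar> *\<^sub>R f (C *v z))"
    unfolding fC by (rule SP(1))
  then have "integrable lborel (\<lambda>z. inverse \<bar>det C\<bar> *\<^sub>R (\<bar>det C\<bar> *\<^sub>R f (C *v z)))"
    by (rule integrable_scaleR_right)
  then have "integrable lborel (\<lambda>z. f (C *v z))" using dC by simp
  then have "integrable lborel f" using int_lb by simp
  then show "integrable (gaussian A) (\<lambda>x. h (c \<bullet> x))"
    unfolding gaussian_def f_def
    by (subst integrable_density) (auto simp: gauss_density_nonneg less_imp_le[OF detA])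
  have "(\<integral>x. h (c \<bullet> x) \<partial>gaussian A) = (\<integral>x. f x \<partial>lborel)"
    unfolding gaussian_def f_def
    by (subst integral_density) (auto simp: gauss_density_nonneg less_imp_le[OF detA])
  also have "\<dots> = \<bar>det C\<bar> *\<^sub>R (\<integral>z. f (C *v z) \<partial>lborel)"
    by (rule lborel_linear_cv_integral[OF C(1) f])
  also have "\<dots> = (\<integral>z. \<bar>det C\<bar> *\<^sub>R f (C *v z) \<partial>lborel)"
    by simp
  also have "\<dots> = (\<integral>t. std_normal_density t * h (q * t) \<partial>lborel)"
    unfolding fC by (rule SP(2))
  finally show "(\<integral>x. h (c \<bullet> x) \<partial>gaussian A) = (\<integral>t. std_normal_density t * h (sqrt (c \<bullet> (A *v c)) * t) \<partial>lborel)"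
    by (simp add: q_def)
qed


(* ---- part P7 ---- *)

context
  fixes A :: "real^'n^'n"
  assumes A: "pos_def A"
begin

lemma qf_nonneg: "c \<bullet> (A *v c) \<ge> 0"
  using A unfolding pos_def_def by (cases "c = 0") (auto intro: less_imp_le)

lemma Asym: "b \<bullet> (A *v a) = a \<bullet> (A *v b)"
proof -
  have "transpose A = A" using A by (simp add: pos_def_def)
  then show ?thesis using inner_S[of b A a] by (simp add: inner_commute)
qed

lemma gauss_moment:
  shows "integrable (gaussian A) (\<lambda>x. (c \<bullet> x) ^ k)"
    and "(\<integral>x. (c \<bullet> x) ^ k \<partial>gaussian A) = sqrt (c \<bullet> (A *v c)) ^ k * (\<integral>t. std_normal_density t * t ^ k \<partial>lborel)"
proof -
  define s where "s = sqrt (c \<bullet> (A *v c))"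
  have hi: "integrable lborel (\<lambda>t. std_normal_density t * (s * t) ^ k)"
  proof -
    have "integrable lborel (\<lambda>t. s ^ k * (std_normal_density t * t ^ k))"
      using integrable_std_normal_moment[of k] by (rule integrable_mult_right)
    then show ?thesis by (simp add: power_mult_distrib algebra_simps)
  qed
  have m: "(\<lambda>t::real. t ^ k) \<in> borel_measurable borel" by measurable
  note G = gauss_proj[OF A m, of c, folded s_def, OF hi]
  show "integrable (gaussian A) (\<lambda>x. (c \<bullet> x) ^ k)" by (rule G(1))
  have "(\<integral>x. (c \<bullet> x) ^ k \<partial>gaussian A) = (\<integral>t. std_normal_density t * (s * t) ^ k \<partial>lborel)"
    by (rule G(2))
  also have "\<dots> = (\<integral>t. s ^ k * (std_normal_density t * t ^ k) \<partial>lborel)"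
    by (simp add: power_mult_distrib algebra_simps)
  also have "\<dots> = s ^ k * (\<integral>t. std_normal_density t * t ^ k \<partial>lborel)"
    by simp
  finally show "(\<integral>x. (c \<bullet> x) ^ k \<partial>gaussian A) = sqrt (c \<bullet> (A *v c)) ^ k * (\<integral>t. std_normal_density t * t ^ k \<partial>lborel)"
    by (simp add: s_def)
qed

lemma gm0: "integrable (gaussian A) (\<lambda>x. 1::real)" "(\<integral>x. 1 \<partial>gaussian A) = (1::real)"
  using gauss_moment[of 0 0] by simp_all

lemma gm1: "integrable (gaussian A) (\<lambda>x. c \<bullet> x)" "(\<integral>x. c \<bullet> x \<partial>gaussian A) = 0"
  using gauss_moment[of c 1] integral_std_normal_moment_odd[of 0] by simp_all

lemma gm2: "integrable (gaussian A) (\<lambda>x. (c \<bullet> x)^2)" "(\<integral>x. (c \<bullet> x)^2 \<partial>gaussian A) = c \<bullet> (A *v c)"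
  using gauss_moment[of c 2] integral_std_normal_moment_even[of 1] qf_nonneg[of c] by simp_all

lemma gm4: "integrable (gaussian A) (\<lambda>x. (c \<bullet> x)^4)" "(\<integral>x. (c \<bullet> x)^4 \<partial>gaussian A) = 3 * (c \<bullet> (A *v c))^2"
proof -
  show "integrable (gaussian A) (\<lambda>x. (c \<bullet> x)^4)" using gauss_moment[of c 4] by simp
  have e: "(\<integral>t. std_normal_density t * t ^ 4 \<partial>lborel) = 3"
    using integral_std_normal_moment_even[of 2] by (simp add: fact_numeral)
  have "sqrt (c \<bullet> (A *v c)) ^ 4 = (c \<bullet> (A *v c))^2"
    using qf_nonneg[of c] by (metis power2_eq_square power_mult_distrib real_sqrt_pow2 mult_2 power_add numeral_Bit0 numeral_One)
  then show "(\<integral>x. (c \<bullet> x)^4 \<partial>gaussian A) = 3 * (c \<bullet> (A *v c))^2"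
    using gauss_moment(2)[of c 4] e by simp
qed

lemma prob_gauss: "prob_space (gaussian A)"
proof
  have "emeasure (gaussian A) (space (gaussian A)) < \<infinity>"
    using gm0(1) by (simp add: integrable_iff_bounded)
  moreover have "measure (gaussian A) (space (gaussian A)) = 1"
    using gm0(2) by simp
  ultimately show "emeasure (gaussian A) (space (gaussian A)) = 1"
    by (simp add: emeasure_eq_ennreal_measure less_top)
qed

lemma qf_add: "(a + b) \<bullet> (A *v (a + b)) = a \<bullet> (A *v a) + 2 * (a \<bullet> (A *v b)) + b \<bullet> (A *v b)"
  using Asym[of a b] by (simp add: matrix_vector_right_distrib inner_add_left inner_add_right)

lemma qf_diff: "(a - b) \<bullet> (A *v (a - b)) = a \<bullet> (A *v a) - 2 * (a \<bullet> (A *v b)) + b \<bullet> (A *v b)"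
  using Asym[of a b] by (simp add: matrix_vector_mult_diff_distrib inner_diff_left inner_diff_right)

lemma bf_add: "a \<bullet> (A *v (b + d)) = a \<bullet> (A *v b) + a \<bullet> (A *v d)"
  by (simp add: matrix_vector_right_distrib inner_add_right)

lemma bf_diff: "a \<bullet> (A *v (b - d)) = a \<bullet> (A *v b) - a \<bullet> (A *v d)"
  by (simp add: matrix_vector_mult_diff_distrib inner_diff_right)

lemma gE2: "integrable (gaussian A) (\<lambda>x. (a \<bullet> x) * (b \<bullet> x))"
  "(\<integral>x. (a \<bullet> x) * (b \<bullet> x) \<partial>gaussian A) = a \<bullet> (A *v b)"
proof -
  have eq: "(\<lambda>x. (a \<bullet> x) * (b \<bullet> x)) = (\<lambda>x. (1/4) * ((a + b) \<bullet> x)^2 - (1/4) * ((a - b) \<bullet> x)^2)"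
    by (rule ext) (simp add: inner_add_left inner_diff_left power2_eq_square algebra_simps)
  show "integrable (gaussian A) (\<lambda>x. (a \<bullet> x) * (b \<bullet> x))"
    unfolding eq by (intro Bochner_Integration.integrable_diff integrable_mult_right gm2(1))
  have "(\<integral>x. (a \<bullet> x) * (b \<bullet> x) \<partial>gaussian A)
      = (1/4) * ((a + b) \<bullet> (A *v (a + b))) - (1/4) * ((a - b) \<bullet> (A *v (a - b)))"
    unfolding eq by (simp add: gm2)
  also have "\<dots> = a \<bullet> (A *v b)"
    unfolding qf_add qf_diff by (simp add: field_simps)
  finally show "(\<integral>x. (a \<bullet> x) * (b \<bullet> x) \<partial>gaussian A) = a \<bullet> (A *v b)" .
qed

lemma gE22: "integrable (gaussian A) (\<lambda>x. (a \<bullet> x)^2 * (e \<bullet> x)^2)"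
  "(\<integral>x. (a \<bullet> x)^2 * (e \<bullet> x)^2 \<partial>gaussian A)
     = (a \<bullet> (A *v a)) * (e \<bullet> (A *v e)) + 2 * (a \<bullet> (A *v e))^2"
proof -
  have eq: "(\<lambda>x. (a \<bullet> x)^2 * (e \<bullet> x)^2) = (\<lambda>x. (1/12) * ((a + e) \<bullet> x)^4 + (1/12) * ((a - e) \<bullet> x)^4
       - (1/6) * (a \<bullet> x)^4 - (1/6) * (e \<bullet> x)^4)"
    by (rule ext) (simp add: inner_add_left inner_diff_left power2_eq_square power4_eq_xxxx algebra_simps)
  show "integrable (gaussian A) (\<lambda>x. (a \<bullet> x)^2 * (e \<bullet> x)^2)"
    unfolding eq by (intro Bochner_Integration.integrable_diff Bochner_Integration.integrable_add integrable_mult_right gm4(1))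
  have "(\<integral>x. (a \<bullet> x)^2 * (e \<bullet> x)^2 \<partial>gaussian A)
      = (1/12) * (3 * ((a + e) \<bullet> (A *v (a + e)))^2) + (1/12) * (3 * ((a - e) \<bullet> (A *v (a - e)))^2)
        - (1/6) * (3 * (a \<bullet> (A *v a))^2) - (1/6) * (3 * (e \<bullet> (A *v e))^2)"
    unfolding eq by (simp add: gm4)
  also have "\<dots> = (a \<bullet> (A *v a)) * (e \<bullet> (A *v e)) + 2 * (a \<bullet> (A *v e))^2"
    unfolding qf_add qf_diff by (simp add: power2_eq_square algebra_simps)
  finally show "(\<integral>x. (a \<bullet> x)^2 * (e \<bullet> x)^2 \<partial>gaussian A)
     = (a \<bullet> (A *v a)) * (e \<bullet> (A *v e)) + 2 * (a \<bullet> (A *v e))^2" .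
qed

lemma gE4: "integrable (gaussian A) (\<lambda>x. (a \<bullet> x)^2 * ((b \<bullet> x) * (d \<bullet> x)))"
  "(\<integral>x. (a \<bullet> x)^2 * ((b \<bullet> x) * (d \<bullet> x)) \<partial>gaussian A)
     = (a \<bullet> (A *v a)) * (b \<bullet> (A *v d)) + 2 * (a \<bullet> (A *v b)) * (a \<bullet> (A *v d))"
proof -
  have eq: "(\<lambda>x. (a \<bullet> x)^2 * ((b \<bullet> x) * (d \<bullet> x))) = (\<lambda>x. (1/4) * ((a \<bullet> x)^2 * ((b + d) \<bullet> x)^2)
       - (1/4) * ((a \<bullet> x)^2 * ((b - d) \<bullet> x)^2))"
    by (rule ext) (simp add: inner_add_left inner_diff_left power2_eq_square algebra_simps)
  show "integrable (gaussian A) (\<lambda>x. (a \<bullet> x)^2 * ((b \<bullet> x) * (d \<bullet> x)))"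
    unfolding eq by (intro Bochner_Integration.integrable_diff integrable_mult_right gE22(1))
  have "(\<integral>x. (a \<bullet> x)^2 * ((b \<bullet> x) * (d \<bullet> x)) \<partial>gaussian A)
      = (1/4) * ((a \<bullet> (A *v a)) * ((b + d) \<bullet> (A *v (b + d))) + 2 * (a \<bullet> (A *v (b + d)))^2)
      - (1/4) * ((a \<bullet> (A *v a)) * ((b - d) \<bullet> (A *v (b - d))) + 2 * (a \<bullet> (A *v (b - d)))^2)"
    unfolding eq by (simp add: gE22)
  also have "\<dots> = (a \<bullet> (A *v a)) * (b \<bullet> (A *v d)) + 2 * (a \<bullet> (A *v b)) * (a \<bullet> (A *v d))"
    unfolding qf_add qf_diff bf_add bf_diff using Asym[of d b] by (simp add: power2_eq_square algebra_simps)
  finally show "(\<integral>x. (a \<bullet> x)^2 * ((b \<bullet> x) * (d \<bullet> x)) \<partial>gaussian A)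
     = (a \<bullet> (A *v a)) * (b \<bullet> (A *v d)) + 2 * (a \<bullet> (A *v b)) * (a \<bullet> (A *v d))" .
qed

end

(* ---- part P8 ---- *)

lemma bounded_linear_axis': "bounded_linear (axis i :: 'b::real_normed_vector \<Rightarrow> 'b^'n)"
proof
  show "axis i (x + y) = axis i x + axis i y" for x y :: 'b
    by (simp add: vec_eq_iff axis_def)
  show "axis i (r *\<^sub>R x) = r *\<^sub>R axis i x" for r and x :: 'b
    by (simp add: vec_eq_iff axis_def)
  show "\<exists>K. \<forall>x::'b. norm (axis i x :: 'b^'n) \<le> norm x * K"
  proof (intro exI[of _ 1] allI)
    fix x :: 'b
    have "(\<Sum>j\<in>UNIV. norm ((axis i x :: 'b^'n) $ j)) = norm x"
      by (simp add: axis_def if_distrib sum.delta cong: if_cong)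
    then show "norm (axis i x :: 'b^'n) \<le> norm x * 1"
      using L2_set_le_sum[of UNIV "\<lambda>j. norm ((axis i x :: 'b^'n) $ j)"] by (simp add: norm_vec_def)
  qed
qed

lemma sum_axis_vec: "(\<Sum>i\<in>UNIV. axis i (y $ i)) = (y :: 'b::real_normed_vector^'n)"
  by (simp add: vec_eq_iff axis_def sum.delta' if_distrib cong: if_cong)

lemma integrable_vec_iff:
  fixes f :: "'a \<Rightarrow> 'b::euclidean_space^'n"
  shows "integrable M f \<longleftrightarrow> (\<forall>i. integrable M (\<lambda>x. f x $ i))"
proof safe
  fix i assume "integrable M f"
  then show "integrable M (\<lambda>x. f x $ i)"
    using integrable_bounded_linear[OF bounded_linear_vec_nth] by blast
next
  assume "\<forall>i. integrable M (\<lambda>x. f x $ i)"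
  then have "integrable M (\<lambda>x. \<Sum>i\<in>UNIV. axis i (f x $ i))"
    by (intro Bochner_Integration.integrable_sum integrable_bounded_linear[OF bounded_linear_axis']) auto
  then show "integrable M f" by (simp add: sum_axis_vec)
qed

lemma integral_vec_nth:
  fixes f :: "'a \<Rightarrow> 'b::euclidean_space^'n"
  assumes "integrable M f"
  shows "(\<integral>x. f x \<partial>M) $ i = (\<integral>x. f x $ i \<partial>M)"
  using integral_bounded_linear[OF bounded_linear_vec_nth assms] by simp


(* ---- part P9 ---- *)

lemma Amat: "A $ i $ j = axis i 1 \<bullet> (A *v axis j (1::real))"
  for A :: "real^'n^'n"
  by (simp add: inner_axis' matrix_vector_mul_component inner_axis)

lemma noise_cov_formula:
  fixes A \<Gamma> :: "real^'n^'n" and u w :: "real^'n"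
  assumes A: "pos_def A"
  shows "noise_cov A \<Gamma> u S w
    = (1 / real S) *\<^sub>R (((w - u) \<bullet> (A *v (w - u))) *\<^sub>R A + outer (A *v (w - u)) (A *v (w - u)))"
proof -
  interpret P: prob_space "gaussian A" by (rule prob_gauss[OF A])
  define v where "v = w - u"
  define \<gamma> where "\<gamma> = \<Gamma> *v w"
  define e where "e i = (axis i 1 :: real^'n)" for i
  have gc: "sample_grad \<Gamma> u x w $ i = (v \<bullet> x) * (e i \<bullet> x) + \<gamma> $ i" for x i
    by (simp add: sample_grad_def v_def \<gamma>_def e_def inner_axis')
  have Av: "v \<bullet> (A *v e i) = (A *v v) $ i" for i
    using Asym[OF A, of "e i" v] by (simp add: e_def inner_axis')
  have gci: "integrable (gaussian A) (\<lambda>x. sample_grad \<Gamma> u x w $ i)" for i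
    unfolding gc by (intro Bochner_Integration.integrable_add gE2(1)[OF A]) simp
  have gi: "integrable (gaussian A) (\<lambda>x. sample_grad \<Gamma> u x w)"
    using gci by (simp add: integrable_vec_iff)
  have fg: "full_grad A \<Gamma> u w $ i = (A *v v) $ i + \<gamma> $ i" for i
  proof -
    have "full_grad A \<Gamma> u w $ i = (\<integral>x. sample_grad \<Gamma> u x w $ i \<partial>gaussian A)"
      unfolding full_grad_def by (rule integral_vec_nth[OF gi])
    also have "\<dots> = (\<integral>x. (v \<bullet> x) * (e i \<bullet> x) \<partial>gaussian A) + \<gamma> $ i"
      unfolding gc by (subst Bochner_Integration.integral_add) (auto intro: gE2(1)[OF A] simp: P.prob_space)
    finally show ?thesis by (simp add: gE2(2)[OF A] Av P.prob_space)
  qed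
  define G where "G x = outer (sample_grad \<Gamma> u x w) (sample_grad \<Gamma> u x w)" for x
  have Gc: "G x $ i $ j = (v \<bullet> x)^2 * ((e i \<bullet> x) * (e j \<bullet> x)) + \<gamma> $ j * ((v \<bullet> x) * (e i \<bullet> x))
      + \<gamma> $ i * ((v \<bullet> x) * (e j \<bullet> x)) + \<gamma> $ i * \<gamma> $ j" for x i j
    by (simp add: G_def outer_def gc power2_eq_square algebra_simps)
  have Gci: "integrable (gaussian A) (\<lambda>x. G x $ i $ j)" for i j
    unfolding Gc
    by (intro Bochner_Integration.integrable_add integrable_mult_right gE4(1)[OF A] gE2(1)[OF A]) simp
  have Gi1: "integrable (gaussian A) (\<lambda>x. G x $ i)" for i
    using Gci by (simp add: integrable_vec_iff)
  have Gi: "integrable (gaussian A) G"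
    using Gi1 by (simp add: integrable_vec_iff)
  have EG: "(\<integral>x. G x \<partial>gaussian A) $ i $ j
     = (v \<bullet> (A *v v)) * A $ i $ j + 2 * (A *v v) $ i * (A *v v) $ j + \<gamma> $ j * (A *v v) $ i
       + \<gamma> $ i * (A *v v) $ j + \<gamma> $ i * \<gamma> $ j" for i j
  proof -
    have "(\<integral>x. G x \<partial>gaussian A) $ i $ j = (\<integral>x. G x $ i $ j \<partial>gaussian A)"
      by (simp add: integral_vec_nth[OF Gi] integral_vec_nth[OF Gi1])
    also have "\<dots> = (\<integral>x. (v \<bullet> x)^2 * ((e i \<bullet> x) * (e j \<bullet> x)) \<partial>gaussian A)
        + \<gamma> $ j * (\<integral>x. (v \<bullet> x) * (e i \<bullet> x) \<partial>gaussian A)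
        + \<gamma> $ i * (\<integral>x. (v \<bullet> x) * (e j \<bullet> x) \<partial>gaussian A) + \<gamma> $ i * \<gamma> $ j"
      unfolding Gc
      by (subst Bochner_Integration.integral_add, (auto intro!: Bochner_Integration.integrable_add integrable_mult_right gE4(1)[OF A] gE2(1)[OF A])[2])+
         (simp add: P.prob_space)
    also have "\<dots> = (v \<bullet> (A *v v)) * A $ i $ j + 2 * (A *v v) $ i * (A *v v) $ j + \<gamma> $ j * (A *v v) $ i
       + \<gamma> $ i * (A *v v) $ j + \<gamma> $ i * \<gamma> $ j"
      by (simp add: gE4(2)[OF A] gE2(2)[OF A] Av[unfolded e_def] Amat[of A i j] e_def)
    finally show ?thesis .
  qed
  have nc: "noise_cov A \<Gamma> u S w = (1 / real S) *\<^sub>R (\<integral>x. G x \<partial>gaussian A)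
      - (1 / real S) *\<^sub>R outer (full_grad A \<Gamma> u w) (full_grad A \<Gamma> u w)"
    unfolding noise_cov_def G_def by simp
  show ?thesis
    unfolding nc v_def[symmetric]
    by (simp add: vec_eq_iff EG outer_def fg algebra_simps)
qed


(* ---- part P10 ---- *)

lemma trace_outer: "trace (M ** outer u u) = u \<bullet> (M *v u)" for M :: "real^'n^'n"
  by (simp add: trace_def matrix_matrix_mult_def outer_def inner_vec_def matrix_vector_mult_def
      sum_distrib_left sum_distrib_right algebra_simps)

lemma mult_outer: "M ** outer u u ** N = outer (M *v u) (transpose N *v u)" for M N :: "real^'n^'n"
  by (simp add: vec_eq_iff matrix_matrix_mult_def outer_def matrix_vector_mult_def transpose_def
      sum_distrib_left sum_distrib_right algebra_simps)

lemma outer_neg: "outer (- p) (- p) = outer p p"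
  by (simp add: outer_def)

lemma matrix_add_rdistrib': "(B + C) ** (A::'a::semiring_1^'n^'m) = B ** A + C ** A"
  by (vector matrix_matrix_mult_def sum.distrib[symmetric] field_simps)

lemma matrix_algebra:
  fixes A \<Gamma> :: "real^'n^'n" and u :: "real^'n"
  defines "K \<equiv> A + \<Gamma>"
  defines "A' \<equiv> matrix_inv K ** A"
  defines "\<Gamma>' \<equiv> matrix_inv K ** \<Gamma>"
  assumes Asym: "transpose A = A" and \<Gamma>_sym: "transpose \<Gamma> = \<Gamma>"
    and comm: "A ** \<Gamma> = \<Gamma> ** A"
    and K_inv: "invertible K"
  shows "matrix_inv K *v (A *v u) - u = - (\<Gamma>' *v u)"
    and "trace (transpose \<Gamma>' ** A ** \<Gamma>' ** outer u u) = (\<Gamma>' *v u) \<bullet> (A *v (\<Gamma>' *v u))"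
    and "\<Gamma> ** A' ** outer u u ** A' ** \<Gamma> = outer (A *v (\<Gamma>' *v u)) (A *v (\<Gamma>' *v u))"
proof -
  define Ki where "Ki = matrix_inv K"
  have KK: "K ** Ki = mat 1" "Ki ** K = mat 1"
    using K_inv by (auto simp: Ki_def matrix_inv_both)
  have KA: "K ** A = A ** K"
    by (simp add: K_def matrix_add_ldistrib matrix_add_rdistrib' comm)
  have KG: "K ** \<Gamma> = \<Gamma> ** K"
    by (simp add: K_def matrix_add_ldistrib matrix_add_rdistrib' comm)
  have comm_inv: "Ki ** X = X ** Ki" if "K ** X = X ** K" for X :: "real^'n^'n"
  proof -
    have "Ki ** X = Ki ** X ** (K ** Ki)" by (simp add: KK)
    also have "\<dots> = Ki ** (X ** K) ** Ki" by (simp add: matrix_mul_assoc)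
    also have "\<dots> = Ki ** (K ** X) ** Ki" by (simp add: that)
    also have "\<dots> = X ** Ki" by (simp add: matrix_mul_assoc KK)
    finally show ?thesis .
  qed
  have KiA: "Ki ** A = A ** Ki" by (rule comm_inv[OF KA])
  have KiG: "Ki ** \<Gamma> = \<Gamma> ** Ki" by (rule comm_inv[OF KG])
  have Ktr: "transpose K = K"
  proof -
    have "transpose K = transpose A + transpose \<Gamma>" by (simp add: K_def transpose_def vec_eq_iff)
    then show ?thesis by (simp add: Asym \<Gamma>_sym K_def)
  qed
  have Kitr: "transpose Ki = Ki"
  proof -
    have "transpose Ki ** K = mat 1"
      using KK(1) by (metis Ktr matrix_transpose_mul transpose_mat)
    have "transpose Ki = transpose Ki ** (K ** Ki)" by (simp add: KK)
    also have "\<dots> = (transpose Ki ** K) ** Ki" by (simp add: matrix_mul_assoc)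
    finally show ?thesis using \<open>transpose Ki ** K = mat 1\<close> by simp
  qed
  show "matrix_inv K *v (A *v u) - u = - (\<Gamma>' *v u)"
  proof -
    have "u = Ki *v (K *v u)" by (simp add: matrix_vector_mul_assoc KK)
    then have "Ki *v (A *v u) - u = Ki *v (A *v u) - Ki *v (K *v u)" by simp
    also have "\<dots> = - (Ki *v (\<Gamma> *v u))"
      by (simp add: K_def matrix_vector_mult_add_rdistrib matrix_vector_mult_diff_distrib[symmetric] matrix_vector_right_distrib)
    finally show ?thesis by (simp add: \<Gamma>'_def Ki_def matrix_vector_mul_assoc)
  qed
  show "trace (transpose \<Gamma>' ** A ** \<Gamma>' ** outer u u) = (\<Gamma>' *v u) \<bullet> (A *v (\<Gamma>' *v u))"
    by (simp add: trace_outer quad_congr)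
  have GA': "\<Gamma> ** A' = A ** \<Gamma>'"
    unfolding A'_def \<Gamma>'_def Ki_def[symmetric]
    by (metis KiA KiG comm matrix_mul_assoc)
  have A'G: "transpose (A' ** \<Gamma>) = A ** \<Gamma>'"
    unfolding A'_def \<Gamma>'_def Ki_def[symmetric]
    by (metis Asym Kitr \<Gamma>_sym KiA KiG comm matrix_mul_assoc matrix_transpose_mul)
  have "\<Gamma> ** A' ** outer u u ** A' ** \<Gamma> = (\<Gamma> ** A') ** outer u u ** (A' ** \<Gamma>)"
    by (simp add: matrix_mul_assoc)
  also have "\<dots> = outer (A *v (\<Gamma>' *v u)) (A *v (\<Gamma>' *v u))"
    unfolding mult_outer A'G GA' by (simp add: matrix_vector_mul_assoc)
  finally show "\<Gamma> ** A' ** outer u u ** A' ** \<Gamma> = outer (A *v (\<Gamma>' *v u)) (A *v (\<Gamma>' *v u))" .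
qed


(* ---- part P11s ---- *)

lemma comp_le_norm: "\<bar>w $ k\<bar> \<le> norm (w::real^'n)"
  by (rule component_le_norm_cart)

lemma double_sum_integral:
  fixes f :: "'n::finite \<Rightarrow> 'n \<Rightarrow> 'a \<Rightarrow> real"
  assumes "\<And>k l. integrable M (f k l)"
  shows "integrable M (\<lambda>x. \<Sum>k\<in>UNIV. \<Sum>l\<in>UNIV. c k l * f k l x)"
    and "(\<integral>x. (\<Sum>k\<in>UNIV. \<Sum>l\<in>UNIV. c k l * f k l x) \<partial>M) = (\<Sum>k\<in>UNIV. \<Sum>l\<in>UNIV. c k l * (\<integral>x. f k l x \<partial>M))"
  using assms by (auto intro!: Bochner_Integration.integrable_sum integrable_mult_right
     simp: Bochner_Integration.integral_sum)

theorem proposition3: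
  fixes A \<Gamma> :: "real^'n^'n" and u w_star :: "real^'n" and S :: nat
    and P :: "(real^'n) measure"
  defines "K \<equiv> A + \<Gamma>"
  defines "A' \<equiv> matrix_inv K ** A"
  defines "\<Gamma>' \<equiv> matrix_inv K ** \<Gamma>"
  defines "U \<equiv> outer u u"
  defines "\<Sigma> \<equiv> integral\<^sup>L P (\<lambda>w. outer (w - w_star) (w - w_star))"
  assumes A_pd: "pos_def A"
    and \<Gamma>_sym: "transpose \<Gamma> = \<Gamma>"
    and comm: "A ** \<Gamma> = \<Gamma> ** A"
    and K_inv: "invertible K"
    and S_pos: "S \<ge> 1"
    and w_star_def: "w_star = matrix_inv K *v (A *v u)"
    and P_prob: "prob_space P"
    and P_borel: "sets P = sets borel"
    and P_sq: "integrable P (\<lambda>w. norm w ^ 2)"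
    and P_mean: "integral\<^sup>L P (\<lambda>w. w) = w_star"
  shows "integral\<^sup>L P (\<lambda>w. noise_cov A \<Gamma> u S w)
       = (1 / real S) *\<^sub>R (A ** \<Sigma> ** A + trace (A ** \<Sigma>) *\<^sub>R A
            + trace (transpose \<Gamma>' ** A ** \<Gamma>' ** U) *\<^sub>R A + \<Gamma> ** A' ** U ** A' ** \<Gamma>)"
proof -
  interpret P: prob_space P by (rule P_prob)
  have Asym: "transpose A = A" using A_pd by (simp add: pos_def_def)
  have Ae: "A $ l $ j = A $ j $ l" for l j using A_pd by (rule pos_def_sym)
  note MA = matrix_algebra[of A \<Gamma> u, folded K_def, folded A'_def \<Gamma>'_def, OF Asym \<Gamma>_sym comm K_inv]
  define p where "p = \<Gamma>' *v u"
  have ws: "w_star - u = - p" using MA(1) by (simp add: w_star_def p_def)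
  have id[measurable]: "(\<lambda>w. w) \<in> borel_measurable P"
    using measurable_ident_sets[OF P_borel] .
  have compb: "(\<lambda>w::real^'n. w $ k) \<in> borel_measurable borel" for k
    by (intro borel_measurable_continuous_onI continuous_intros)
  have comp[measurable]: "(\<lambda>w::real^'n. w $ k) \<in> borel_measurable P" for k
    using measurable_compose[OF id compb] by simp
  have I2: "integrable P (\<lambda>w. w $ k * w $ l)" for k l
  proof (rule Bochner_Integration.integrable_bound[OF P_sq])
    show "(\<lambda>w. w $ k * w $ l) \<in> borel_measurable P" by measurable
    show "AE w in P. norm (w $ k * w $ l) \<le> norm (norm w ^ 2)"
    proof (intro AE_I2)
      fix w :: "real^'n"
      have "\<bar>w $ k\<bar> * \<bar>w $ l\<bar> \<le> norm w * norm w"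
        by (intro mult_mono comp_le_norm) auto
      then show "norm (w $ k * w $ l) \<le> norm (norm w ^ 2)" by (simp add: abs_mult power2_eq_square)
    qed
  qed
  have I1: "integrable P (\<lambda>w. w $ k)" for k
  proof (rule Bochner_Integration.integrable_bound[of _ "\<lambda>w. 1 + norm w ^ 2"])
    show "integrable P (\<lambda>w. 1 + norm w ^ 2)" using P_sq by simp
    show "(\<lambda>w. w $ k) \<in> borel_measurable P" by measurable
    show "AE w in P. norm (w $ k) \<le> norm (1 + norm w ^ 2)"
    proof (intro AE_I2)
      fix w :: "real^'n"
      have nw: "norm w \<le> 1 + norm w ^ 2"
      proof (cases "norm w \<le> 1")
        case True then show ?thesis by (metis add_increasing2 order_trans zero_le_power2 order_refl)
      next
        case False
        then have "norm w \<le> norm w * norm w" by (simp add: mult_le_cancel_left1)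
        then show ?thesis by (simp add: power2_eq_square)
      qed
      have "\<bar>w $ k\<bar> \<le> 1 + norm w ^ 2"
        using comp_le_norm[of w k] nw by linarith
      then show "norm (w $ k) \<le> norm (1 + norm w ^ 2)" by simp
    qed
  qed
  have Iw: "integrable P (\<lambda>w. w)" using I1 by (simp add: integrable_vec_iff)
  have E1: "(\<integral>w. w $ k \<partial>P) = w_star $ k" for k
    using integral_vec_nth[OF Iw, of k] P_mean by simp
  define X where "X k l = (\<integral>w. (w $ k - w_star $ k) * (w $ l - w_star $ l) \<partial>P)" for k l
  have dd: "(w $ k - w_star $ k) * (w $ l - w_star $ l)
      = w $ k * w $ l - w_star $ l * w $ k - w_star $ k * w $ l + w_star $ k * w_star $ l" for w :: "real^'n" and k l
    by (simp add: algebra_simps)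
  have Idd: "integrable P (\<lambda>w. (w $ k - w_star $ k) * (w $ l - w_star $ l))" for k l
    unfolding dd by (intro Bochner_Integration.integrable_add Bochner_Integration.integrable_diff integrable_mult_right I1 I2) simp
  have OD: "integrable P (\<lambda>w. outer (w - w_star) (w - w_star) $ k)" for k
    using Idd by (simp add: integrable_vec_iff outer_def)
  have OD2: "integrable P (\<lambda>w. outer (w - w_star) (w - w_star))"
    using OD by (simp add: integrable_vec_iff)
  have Sig: "\<Sigma> $ k $ l = X k l" for k l
    unfolding \<Sigma>_def by (simp add: integral_vec_nth[OF OD2] integral_vec_nth[OF OD]) (simp add: outer_def X_def)
  have Xsym: "X k l = X l k" for k l
    unfolding X_def by (simp add: mult.commute)
  define z where "z w = w - u" for w :: "real^'n"
  have zz: "z w $ k * z w $ l = (w $ k - w_star $ k) * (w $ l - w_star $ l)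
       - p $ l * (w $ k - w_star $ k) - p $ k * (w $ l - w_star $ l) + p $ k * p $ l" for w k l
  proof -
    have "z w = (w - w_star) + (w_star - u)" by (simp add: z_def)
    then have zk: "z w $ k = (w $ k - w_star $ k) - p $ k" for k using ws by simp
    show ?thesis by (simp only: zk) (simp add: algebra_simps)
  qed
  have Ed: "(\<integral>w. (w $ k - w_star $ k) \<partial>P) = 0" for k
    using E1[of k] I1[of k] by (simp add: P.prob_space)
  have Izz: "integrable P (\<lambda>w. z w $ k * z w $ l)" for k l
    unfolding zz by (intro Bochner_Integration.integrable_add Bochner_Integration.integrable_diff integrable_mult_right I1 Idd) simp_all
  have Ezz: "(\<integral>w. z w $ k * z w $ l \<partial>P) = X k l + p $ k * p $ l" for k l
    unfolding zz X_def
    by (simp add: Idd I1 Ed P.prob_space)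
  define c where "c i j k l = (1 / real S) * (A $ k $ l * A $ i $ j + A $ i $ k * A $ j $ l)" for i j k l
  have NC: "noise_cov A \<Gamma> u S w $ i $ j = (\<Sum>k\<in>UNIV. \<Sum>l\<in>UNIV. c i j k l * (z w $ k * z w $ l))" for w i j
  proof -
    have "noise_cov A \<Gamma> u S w $ i $ j
        = (1 / real S) * ((z w \<bullet> (A *v z w)) * A $ i $ j + (A *v z w) $ i * (A *v z w) $ j)"
      by (simp add: noise_cov_formula[OF A_pd] z_def outer_def)
    also have "\<dots> = (\<Sum>k\<in>UNIV. \<Sum>l\<in>UNIV. c i j k l * (z w $ k * z w $ l))"
    proof -
      have Q1: "z w \<bullet> (A *v z w) = (\<Sum>k\<in>UNIV. \<Sum>l\<in>UNIV. A $ k $ l * (z w $ k * z w $ l))"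
        by (simp add: inner_vec_def matrix_vector_mult_def sum_distrib_left algebra_simps)
      have Q2: "(A *v z w) $ i * (A *v z w) $ j = (\<Sum>k\<in>UNIV. \<Sum>l\<in>UNIV. A $ i $ k * A $ j $ l * (z w $ k * z w $ l))"
        by (simp add: matrix_vector_mult_def sum_distrib_left sum_distrib_right algebra_simps)
          (subst sum.swap, simp add: algebra_simps)
      show ?thesis unfolding Q1 Q2
        by (simp add: c_def sum_distrib_left sum_distrib_right sum.distrib[symmetric] algebra_simps)
    qed
    finally show ?thesis .
  qed
  have INC2: "integrable P (\<lambda>w. noise_cov A \<Gamma> u S w $ i $ j)" for i j
    unfolding NC by (rule double_sum_integral(1)[OF Izz])
  have INC1: "integrable P (\<lambda>w. noise_cov A \<Gamma> u S w $ i)" for i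
    using INC2 by (simp add: integrable_vec_iff)
  have INC: "integrable P (\<lambda>w. noise_cov A \<Gamma> u S w)"
    using INC1 by (simp add: integrable_vec_iff)
  have LHS: "(\<integral>w. noise_cov A \<Gamma> u S w \<partial>P) $ i $ j
      = (\<Sum>k\<in>UNIV. \<Sum>l\<in>UNIV. c i j k l * (X k l + p $ k * p $ l))" for i j
  proof -
    have "(\<integral>w. noise_cov A \<Gamma> u S w \<partial>P) $ i $ j = (\<integral>w. noise_cov A \<Gamma> u S w $ i $ j \<partial>P)"
      by (simp add: integral_vec_nth[OF INC] integral_vec_nth[OF INC1])
    also have "\<dots> = (\<Sum>k\<in>UNIV. \<Sum>l\<in>UNIV. c i j k l * (\<integral>w. z w $ k * z w $ l \<partial>P))"
      unfolding NC by (rule double_sum_integral(2)[OF Izz])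
    finally show ?thesis by (simp add: Ezz)
  qed
  have R1: "(A ** \<Sigma> ** A) $ i $ j = (\<Sum>k\<in>UNIV. \<Sum>l\<in>UNIV. A $ i $ k * A $ j $ l * X k l)" for i j
    by (simp add: matrix_matrix_mult_def Sig Ae[of _ j] sum_distrib_left sum_distrib_right algebra_simps)
      (subst sum.swap, simp add: algebra_simps)
  have R2: "trace (A ** \<Sigma>) = (\<Sum>k\<in>UNIV. \<Sum>l\<in>UNIV. A $ k $ l * X k l)"
    by (simp add: trace_def matrix_matrix_mult_def Sig Xsym[of _ "_"])
  have R3: "trace (transpose \<Gamma>' ** A ** \<Gamma>' ** U) = (\<Sum>k\<in>UNIV. \<Sum>l\<in>UNIV. A $ k $ l * (p $ k * p $ l))"
    unfolding U_def MA(2) p_def[symmetric] by (simp add: inner_vec_def matrix_vector_mult_def sum_distrib_left algebra_simps)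
  have R4: "(\<Gamma> ** A' ** U ** A' ** \<Gamma>) $ i $ j = (\<Sum>k\<in>UNIV. \<Sum>l\<in>UNIV. A $ i $ k * A $ j $ l * (p $ k * p $ l))" for i j
    unfolding U_def MA(3) p_def[symmetric] by (simp add: outer_def matrix_vector_mult_def sum_distrib_left sum_distrib_right algebra_simps)
      (subst sum.swap, simp add: algebra_simps)
  show ?thesis
  proof (rule vec_eq_iff[THEN iffD2, rule_format], rule vec_eq_iff[THEN iffD2, rule_format])
    fix i j
    show "(\<integral>w. noise_cov A \<Gamma> u S w \<partial>P) $ i $ j = ((1 / real S) *\<^sub>R (A ** \<Sigma> ** A + trace (A ** \<Sigma>) *\<^sub>R A
            + trace (transpose \<Gamma>' ** A ** \<Gamma>' ** U) *\<^sub>R A + \<Gamma> ** A' ** U ** A' ** \<Gamma>)) $ i $ j"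
      unfolding LHS by (simp add: R1 R2 R3 R4 c_def sum_distrib_left sum_distrib_right sum.distrib[symmetric] algebra_simps)
        (intro sum.cong refl; simp add: add_divide_distrib)
  qed
qed


end
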